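(* Let $a_0,a_1,a_2,a_3\in\mathbb{R}$ and for real $\lambda$ let $$\mathbf{M}_\lambda=\begin{bmatrix}1&\frac{a_3}{2}&\frac{a_2-\lambda}{2}\\[2pt] \frac{a_3}{2}&\lambda&\frac{a_1}{2}\\[2pt] \frac{a_2-\lambda}{2}&\frac{a_1}{2}&a_0\end{bmatrix}.$$ For $\lambda_i\in\mathbb{R}$, the conic $\mathbf{M}_{\lambda_i}$ is a degenerate conic consisting of a real repeated line if and only if $\lambda_i=\frac{a_3^2}{4}$ and $\lambda_i$ is a root of multiplicity at least $2$ of the cubic equation $\det(\mathbf{M}_\lambda)=0$ in $\lambda$.
   Context: A real symmetric $3\times3$ matrix $\mathbf{M}$ defines the conic $\{[u:v:w]\in\mathbb{P}^2(\mathbb{C}) : (u,v,w)\mathbf{M}(u,v,w)^T=0\}$. The conic "consists of a real repeated line" if the quadratic form $(u,v,w)\mathbf{M}(u,v,w)^T$ equals $c\,\ell^2$ for some nonzero real constant $c$ and some nonzero linear form $\ell$ with real coefficients. Explicitly, $\det(\mathbf{M}_\lambda)=-\tfrac14\lambda^3+b_2\lambda^2+b_1\lambda+b_0$ with $b_0=\tfrac14(-a_1^2+a_1a_2a_3-a_0a_3^2)$, $b_1=\tfrac14(4a_0-a_2^2-a_1a_3)$, $b_2=\tfrac{a_2}{2}$. *)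

theory Defs
  imports "HOL-Analysis.Analysis" "HOL-Computational_Algebra.Polynomial"
begin

definition Mlam :: "real \<Rightarrow> real \<Rightarrow> real \<Rightarrow> real \<Rightarrow> real \<Rightarrow> real^3^3" where
  "Mlam a0 a1 a2 a3 l = vector [
      vector [1, a3/2, (a2 - l)/2],
      vector [a3/2, l, a1/2],
      vector [(a2 - l)/2, a1/2, a0]]"

definition real_repeated_line :: "real^3^3 \<Rightarrow> bool" where
  "real_repeated_line M \<longleftrightarrow>
     (\<exists>c::real. \<exists>ell::real^3. c \<noteq> 0 \<and> ell \<noteq> 0 \<and>
        (\<forall>x::real^3. x \<bullet> (M *v x) = c * (ell \<bullet> x)^2))"

definition det_poly :: "real \<Rightarrow> real \<Rightarrow> real \<Rightarrow> real \<Rightarrow> real poly" where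
  "det_poly a0 a1 a2 a3 =
     [: (- (a1^2) + a1*a2*a3 - a0*a3^2)/4, (4*a0 - a2^2 - a1*a3)/4, a2/2, -1/4 :]"

lemma poly_det_poly: "poly (det_poly a0 a1 a2 a3) l = det (Mlam a0 a1 a2 a3 l)"
  by (simp add: det_poly_def Mlam_def det_3 vector_3 power2_eq_square field_simps)

end

theory Submission
  imports Defs
begin

lemma taylor2:
  fixes l :: real
  shows "det_poly a0 a1 a2 a3 = ([:poly (det_poly a0 a1 a2 a3) l:] + smult (poly (pderiv (det_poly a0 a1 a2 a3)) l) [:-l,1:])
     + [:-l,1:]^2 * [:a2/2 - l/2, -1/4:]"
proof -
  let ?P = "det_poly a0 a1 a2 a3"
  have H: "poly ?P x = poly (([:poly ?P l:] + smult (poly (pderiv ?P) l) [:-l,1:]) + [:-l,1:]^2 * [:a2/2 - l/2, -1/4:]) x" for x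
    apply (simp add: det_poly_def pderiv_pCons power2_eq_square) 
    by (simp add: field_simps)
  show ?thesis by (rule poly_eq_poly_eq_iff[THEN iffD1], rule ext, rule H)
qed

lemma qform:
  fixes x :: "real^3"
  shows "x \<bullet> (Mlam a0 a1 a2 a3 l *v x) =
    (x$1)^2 + a3*(x$1)*(x$2) + (a2 - l)*(x$1)*(x$3) + l*(x$2)^2 + a1*(x$2)*(x$3) + a0*(x$3)^2"
  by (simp add: Mlam_def inner_vec_def matrix_vector_mult_def sum_3 vector_3 power2_eq_square algebra_simps)

lemma inner3: "(ell::real^3) \<bullet> x = ell$1*x$1 + ell$2*x$2 + ell$3*x$3"
  by (simp add: inner_vec_def sum_3)

lemma P_nz: "det_poly a0 a1 a2 a3 \<noteq> 0"
  by (simp add: det_poly_def)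

lemma order_iff:
  "order l (det_poly a0 a1 a2 a3) \<ge> 2 \<longleftrightarrow>
    poly (det_poly a0 a1 a2 a3) l = 0 \<and> poly (pderiv (det_poly a0 a1 a2 a3)) l = 0"
proof -
  let ?P = "det_poly a0 a1 a2 a3"
  define c0 where "c0 = poly ?P l"
  define c1 where "c1 = poly (pderiv ?P) l"
  define R where "R = [:c0:] + smult c1 [:-l,1:]"
  have T: "?P = R + [:-l,1:]^2 * [:a2/2 - l/2, -1/4:]"
    unfolding R_def c0_def c1_def by (rule taylor2)
  have "order l ?P \<ge> 2 \<longleftrightarrow> [:-l,1:]^2 dvd ?P"
    using order_divides[of l 2 ?P] P_nz by auto
  also have "\<dots> \<longleftrightarrow> [:-l,1:]^2 dvd R"
  proof -
    have D: "[:-l,1:]^2 dvd [:-l,1:]^2 * [:a2/2 - l/2, -1/4:]" by (rule dvd_triv_left)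
    show ?thesis by (simp only: T dvd_add_left_iff[OF D])
  qed
  also have "\<dots> \<longleftrightarrow> R = 0"
  proof
    assume d: "[:-l,1:]^2 dvd R"
    show "R = 0"
    proof (rule ccontr)
      assume "R \<noteq> 0"
      from dvd_imp_degree_le[OF d this] have "degree ([:-l,1:]^2 :: real poly) \<le> degree R" .
      moreover have "degree ([:-l,1:]^2 :: real poly) = 2" by (simp add: degree_power_eq)
      moreover have "degree R \<le> 1" unfolding R_def
        by (rule order.trans[OF degree_add_le_max]) (auto simp: degree_smult_le[THEN order.trans])
      ultimately show False by simp
    qed
  qed simp
  also have "R = 0 \<longleftrightarrow> c0 = 0 \<and> c1 = 0"
    unfolding R_def by (auto simp: algebra_simps)
  finally show ?thesis unfolding c0_def c1_def .
qed

lemma h0: "poly (det_poly a0 a1 a2 (2*p)) (p^2) = -((a1 - p*(a2-p^2))^2)/4"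
  by (simp add: det_poly_def power2_eq_square power3_eq_cube algebra_simps divide_simps)
lemma h1: "poly (pderiv (det_poly a0 a1 a2 (2*p))) (p^2) = (a0 - ((a2-p^2)/2)^2) - p*(a1 - p*(a2-p^2))/2"
  by (simp add: det_poly_def pderiv_pCons power2_eq_square algebra_simps divide_simps)

theorem lemma3:
  fixes a0 a1 a2 a3 li :: real
  shows "real_repeated_line (Mlam a0 a1 a2 a3 li) \<longleftrightarrow>
           li = a3^2 / 4 \<and> order li (det_poly a0 a1 a2 a3) \<ge> 2"
proof -
  define B where "B = a1 - a3*(a2-li)/2"
  define C where "C = a0 - ((a2-li)/2)^2"
  have h0: "poly (det_poly a0 a1 a2 a3) li = -(B^2)/4" if "li = a3^2/4"
  proof -
    define p where "p = a3/2"
    have e: "a3 = 2*p" "li = p^2" using that unfolding p_def by (auto simp: power2_eq_square)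
    show ?thesis unfolding B_def e by (simp add: h0)
  qed
  have h1: "poly (pderiv (det_poly a0 a1 a2 a3)) li = C - a3*B/4" if "li = a3^2/4"
  proof -
    define p where "p = a3/2"
    have e: "a3 = 2*p" "li = p^2" using that unfolding p_def by (auto simp: power2_eq_square)
    show ?thesis unfolding B_def C_def e h1 by (simp add: field_simps power2_eq_square)
  qed
  have ord: "li = a3^2 / 4 \<and> order li (det_poly a0 a1 a2 a3) \<ge> 2 \<longleftrightarrow> li = a3^2/4 \<and> B = 0 \<and> C = 0"
    using h0 h1 order_iff by auto
  have rl: "real_repeated_line (Mlam a0 a1 a2 a3 li) \<longleftrightarrow> li = a3^2/4 \<and> B = 0 \<and> C = 0"
  proof
    assume "real_repeated_line (Mlam a0 a1 a2 a3 li)"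
    then obtain c ell where ne: "c \<noteq> 0" and H: "\<And>x. x \<bullet> (Mlam a0 a1 a2 a3 li *v x) = c * (ell \<bullet> x)^2"
      unfolding real_repeated_line_def by blast
    define e1 where "e1 = ell$1"
    define e2 where "e2 = ell$2"
    define e3 where "e3 = ell$3"
    have Q: "u^2 + a3*u*y + (a2 - li)*u*w + li*y^2 + a1*y*w + a0*w^2 = c*(e1*u+e2*y+e3*w)^2" for u y w :: real
    proof -
      have 1: "vector [u,y,w] \<bullet> (Mlam a0 a1 a2 a3 li *v vector [u,y,w]) = u^2 + a3*u*y + (a2 - li)*u*w + li*y^2 + a1*y*w + a0*w^2"
        by (simp only: qform vector_3)
      have 2: "ell \<bullet> vector [u,y,w] = e1*u+e2*y+e3*w"
        by (simp only: inner3 vector_3 e1_def e2_def e3_def)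
      show ?thesis using H[of "vector [u,y,w]"] unfolding 1 2 .
    qed
    have q1: "c*e1^2 = 1" using Q[of 1 0 0] by simp
    have q2: "c*e2^2 = li" using Q[of 0 1 0] by simp
    have q3: "c*e3^2 = a0" using Q[of 0 0 1] by simp
    have x12: "c*(e1+e2)^2 = c*e1^2 + c*e2^2 + 2*c*e1*e2" by (simp add: power2_eq_square algebra_simps)
    have x13: "c*(e1+e3)^2 = c*e1^2 + c*e3^2 + 2*c*e1*e3" by (simp add: power2_eq_square algebra_simps)
    have x23: "c*(e2+e3)^2 = c*e2^2 + c*e3^2 + 2*c*e2*e3" by (simp add: power2_eq_square algebra_simps)
    have q12: "a3 = 2*c*e1*e2" using Q[of 1 1 0] q1 q2 x12 by simp
    have q13: "a2 - li = 2*c*e1*e3" using Q[of 1 0 1] q1 q3 x13 by simp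
    have q23: "a1 = 2*c*e2*e3" using Q[of 0 1 1] q2 q3 x23 by simp
    have "a3^2/4 = (c*e1^2)*(c*e2^2)" unfolding q12 by (simp add: power2_eq_square)
    hence L: "li = a3^2/4" using q1 q2 by simp
    have "B = 2*c*e2*e3*(1 - c*e1^2)" unfolding B_def q12 q13 q23
      by (simp add: power2_eq_square algebra_simps)
    hence "B = 0" using q1 by simp
    moreover have "C = c*e3^2*(1 - c*e1^2)" unfolding C_def q13 q3[symmetric]
      by (simp add: power2_eq_square algebra_simps)
    hence "C = 0" using q1 by simp
    ultimately show "li = a3^2/4 \<and> B = 0 \<and> C = 0" using L by simp
  next
    assume A: "li = a3^2/4 \<and> B = 0 \<and> C = 0"
    define ell :: "real^3" where "ell = vector [1, a3/2, (a2-li)/2]"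
    have "ell \<noteq> 0" proof
      assume "ell = 0" hence "ell$1 = 0" by simp
      thus False unfolding ell_def by (simp add: vector_3)
    qed
    moreover have "\<forall>x. x \<bullet> (Mlam a0 a1 a2 a3 li *v x) = 1 * (ell \<bullet> x)^2"
    proof
      fix x :: "real^3"
      have a1e: "a1 = a3*(a2-li)/2" using A unfolding B_def by simp
      have a0e: "a0 = ((a2-li)/2)^2" using A unfolding C_def by simp
      have L: "li = a3^2/4" using A by simp
      have 1: "x \<bullet> (Mlam a0 a1 a2 a3 li *v x) = (x$1)^2 + a3*(x$1)*(x$2) + (a2 - li)*(x$1)*(x$3) + li*(x$2)^2 + a1*(x$2)*(x$3) + a0*(x$3)^2"
        by (rule qform)
      have 2: "ell \<bullet> x = x$1 + a3/2*x$2 + (a2-li)/2*x$3"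
        by (simp add: inner3 ell_def vector_3)
      show "x \<bullet> (Mlam a0 a1 a2 a3 li *v x) = 1 * (ell \<bullet> x)^2"
        apply (subst 1, subst 2)
        unfolding a1e a0e L by (simp add: power2_eq_square field_simps)
    qed
    ultimately show "real_repeated_line (Mlam a0 a1 a2 a3 li)"
      unfolding real_repeated_line_def by (intro exI[of _ 1] exI[of _ ell]) simp
  qed
  show ?thesis using ord rl by simp
qed

end
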